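(* Let $\mathbf{k}$ be a field whose characteristic is either $0$ or greater than $d$, let $A = \mathbf{k}^{d}$ with standard basis of orthogonal idempotents $e_1,\dots,e_d$, let $M$ be a finite-dimensional $\mathbf{k}$-vector space and let $\phi : A \to \mathrm{End}_{\mathbf{k}}(M)$ be a $\mathbf{k}$-linear map. Put $\alpha_i = \phi(e_i)$ and $T_\phi = x_1 \otimes \alpha_1 + \dots + x_d \otimes \alpha_d \in \mathbf{k}\langle x_1,\dots,x_d\rangle \otimes_{\mathbf{k}} \mathrm{End}_{\mathbf{k}}(M)$. Then $\phi$ is a (unital) $\mathbf{k}$-algebra homomorphism if and only if \[ \chi_d(T_\phi) := \sum_{\sigma \in S_d} (T_\phi - x_{\sigma(1)})(T_\phi - x_{\sigma(2)})\cdots (T_\phi - x_{\sigma(d)}) = 0 \] in $\mathbf{k}\langle x_1,\dots,x_d\rangle \otimes_{\mathbf{k}} \mathrm{End}_{\mathbf{k}}(M)$.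
   Context: Here $\mathbf{k}\langle x_1,\dots,x_d\rangle$ is the free associative algebra (tensor algebra $\mathrm{T}(A^\vee)$) on the dual basis $x_1,\dots,x_d$ of $A^\vee$ to $e_1,\dots,e_d$; in the tensor product $\mathbf{k}\langle x_1,\dots,x_d\rangle \otimes_{\mathbf{k}} \mathrm{End}_{\mathbf{k}}(M)$ the $x_i$ commute with elements of $\mathrm{End}_{\mathbf{k}}(M)$, and $x_{\sigma(j)}$ stands for $x_{\sigma(j)} \otimes \mathrm{id}_M$. The element $\chi_d = \sum_{\sigma\in S_d}(t - x_{\sigma(1)})\cdots(t - x_{\sigma(d)}) \in \mathbf{k}\langle x_1,\dots,x_d,t\rangle$ is the (unnormalized) symmetrized lift to the free algebra of the characteristic polynomial $\prod_{i=1}^d (t - x_i)$ of left multiplication on $A$, and $\chi_d(T_\phi)$ denotes substituting $t = T_\phi$. *)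

theory Defs
  imports "Jordan_Normal_Form.Matrix" "HOL-Combinatorics.Permutations"
begin

text \<open>Elements of the tensor product k<x_0,...,x_{d-1}> (x) End_k(k^n) are represented
  as functions from words (lists of letter indices) to n x n matrices (the matrix
  coefficient of each word); only finitely many words of interest occur.
  Letters are indexed 0..d-1 instead of 1..d.\<close>

type_synonym 'k ftensor = "nat list \<Rightarrow> 'k mat"

definition ft_zero :: "nat \<Rightarrow> 'k::field ftensor" where
  "ft_zero n = (\<lambda>w. 0\<^sub>m n n)"

definition ft_one :: "nat \<Rightarrow> 'k::field ftensor" where
  "ft_one n = (\<lambda>w. if w = [] then 1\<^sub>m n else 0\<^sub>m n n)"

definition ft_gen :: "nat \<Rightarrow> nat \<Rightarrow> 'k::field ftensor" where
  "ft_gen n i = (\<lambda>w. if w = [i] then 1\<^sub>m n else 0\<^sub>m n n)"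

definition ft_sub :: "nat \<Rightarrow> 'k::field ftensor \<Rightarrow> 'k ftensor \<Rightarrow> 'k ftensor" where
  "ft_sub n f g = (\<lambda>w. mat n n (\<lambda>(i,j). f w $$ (i,j) - g w $$ (i,j)))"

text \<open>Multiplication: the x's commute with matrices, words concatenate.\<close>
definition ft_mult :: "nat \<Rightarrow> 'k::field ftensor \<Rightarrow> 'k ftensor \<Rightarrow> 'k ftensor" where
  "ft_mult n f g = (\<lambda>w. mat n n (\<lambda>(i,j).
      \<Sum>a\<in>{0..length w}. \<Sum>l<n. f (take a w) $$ (i,l) * g (drop a w) $$ (l,j)))"

definition ft_prod :: "nat \<Rightarrow> 'k::field ftensor list \<Rightarrow> 'k ftensor" where
  "ft_prod n fs = foldr (ft_mult n) fs (ft_one n)"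

definition ft_sum :: "nat \<Rightarrow> ('s \<Rightarrow> 'k::field ftensor) \<Rightarrow> 's set \<Rightarrow> 'k ftensor" where
  "ft_sum n F S = (\<lambda>w. mat n n (\<lambda>(i,j). \<Sum>s\<in>S. F s w $$ (i,j)))"

definition T_phi :: "nat \<Rightarrow> nat \<Rightarrow> ('k::field vec \<Rightarrow> 'k mat) \<Rightarrow> 'k ftensor" where
  "T_phi n d \<phi> = (\<lambda>w. case w of [i] \<Rightarrow> (if i < d then \<phi> (unit_vec d i) else 0\<^sub>m n n)
                              | _ \<Rightarrow> 0\<^sub>m n n)"

definition chi_d :: "nat \<Rightarrow> nat \<Rightarrow> 'k::field ftensor \<Rightarrow> 'k ftensor" where
  "chi_d n d T = ft_sum n
     (\<lambda>\<sigma>. ft_prod n (map (\<lambda>k. ft_sub n T (ft_gen n (\<sigma> k))) [0..<d]))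
     {\<sigma>. \<sigma> permutes {..<d}}"

definition alg_hom_kd :: "nat \<Rightarrow> nat \<Rightarrow> ('k::field vec \<Rightarrow> 'k mat) \<Rightarrow> bool" where
  "alg_hom_kd n d \<phi> \<longleftrightarrow>
     \<phi> (vec d (\<lambda>_. 1)) = 1\<^sub>m n \<and>
     (\<forall>a\<in>carrier_vec d. \<forall>b\<in>carrier_vec d.
        \<phi> (vec d (\<lambda>i. a $ i * b $ i)) = \<phi> a * \<phi> b)"

end

theory Submission
  imports Defs "HOL-Computational_Algebra.Polynomial" "HOL-Computational_Algebra.Primes"
begin


definition mprod :: "nat \<Rightarrow> 'k::field mat list \<Rightarrow> 'k mat" where
  "mprod n Ms = foldr (*) Ms (1\<^sub>m n)"

definition msum :: "nat \<Rightarrow> 'a set \<Rightarrow> ('a \<Rightarrow> 'k::field mat) \<Rightarrow> 'k mat" where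
  "msum n S f = mat n n (\<lambda>(i,j). \<Sum>s\<in>S. f s $$ (i,j))"

lemma mprod_carrier: "(\<forall>M\<in>set Ms. M \<in> carrier_mat n n) \<Longrightarrow> mprod n Ms \<in> carrier_mat n n"
  unfolding mprod_def by (induct Ms) auto

lemma mprod_Cons[simp]: "mprod n (M # Ms) = M * mprod n Ms"
  unfolding mprod_def by simp

lemma mprod_Nil[simp]: "mprod n [] = 1\<^sub>m n"
  unfolding mprod_def by simp

lemma msum_carrier[simp]: "msum n S f \<in> carrier_mat n n"
  unfolding msum_def by simp

lemma index_msum[simp]: "i < n \<Longrightarrow> j < n \<Longrightarrow> msum n S f $$ (i,j) = (\<Sum>s\<in>S. f s $$ (i,j))"
  unfolding msum_def by simp

lemma mult_entry: assumes "A \<in> carrier_mat n n" "B \<in> carrier_mat n n" "i < n" "j < n"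
  shows "(A * B) $$ (i,j) = (\<Sum>l<n. A $$ (i,l) * B $$ (l,j))"
  using assms by (auto simp: scalar_prod_def lessThan_atLeast0 intro!: sum.cong)

lemma deg1_mult:
  fixes F G :: "'k::field ftensor"
  assumes F: "\<And>w. F w = (case w of [c] \<Rightarrow> B c | _ \<Rightarrow> 0\<^sub>m n n)"
    and B: "\<And>c. B c \<in> carrier_mat n n" and G: "\<And>w. G w \<in> carrier_mat n n"
  shows "ft_mult n F G w = (case w of [] \<Rightarrow> 0\<^sub>m n n | c # w' \<Rightarrow> B c * G w')"
proof (cases w)
  case Nil
  have F0: "F [] = 0\<^sub>m n n" using F[of "[]"] by simp
  have "ft_mult n F G [] = 0\<^sub>m n n"
  proof (rule eq_matI)
    fix i j assume "i < dim_row (0\<^sub>m n n :: 'k mat)" "j < dim_col (0\<^sub>m n n :: 'k mat)"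
    hence i: "i < n" and j: "j < n" by auto
    show "ft_mult n F G [] $$ (i,j) = 0\<^sub>m n n $$ (i,j)"
      unfolding ft_mult_def using i j F0 by simp
  qed (simp_all add: ft_mult_def)
  thus ?thesis unfolding Nil by simp
next
  case (Cons c w')
  have "ft_mult n F G w = B c * G w'"
  proof (rule eq_matI)
    fix i j assume ij: "i < dim_row (B c * G w')" "j < dim_col (B c * G w')"
    hence i: "i < n" and j: "j < n" using B[of c] G[of w'] by auto
    have tm: "(\<Sum>l<n. F (take a w) $$ (i,l) * G (drop a w) $$ (l,j)) =
       (if a = 1 then (\<Sum>l<n. B c $$ (i,l) * G w' $$ (l,j)) else 0)" if a: "a \<in> {0..length w}" for a
    proof (cases "a = 1")
      case True thus ?thesis using Cons F by simp
    next
      case False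
      have "F (take a w) = 0\<^sub>m n n"
      proof (cases a)
        case 0 thus ?thesis using F by simp
      next
        case (Suc b) with False have "b \<noteq> 0" by simp
        then obtain b' where b': "b = Suc b'" by (cases b) auto
        then obtain c' w'' where w': "w' = c' # w''" using a Cons Suc by (cases w') auto
        show ?thesis using F[of "take a w"] unfolding Cons w' Suc b' by simp
      qed
      thus ?thesis using False i by simp
    qed
    have "ft_mult n F G w $$ (i,j) = (\<Sum>a\<in>{0..length w}. \<Sum>l<n. F (take a w) $$ (i,l) * G (drop a w) $$ (l,j))"
      unfolding ft_mult_def using i j by simp
    also have "\<dots> = (\<Sum>a\<in>{0..length w}. (if a = 1 then (\<Sum>l<n. B c $$ (i,l) * G w' $$ (l,j)) else 0))"
      by (rule sum.cong[OF refl], rule tm)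
    also have "\<dots> = (\<Sum>l<n. B c $$ (i,l) * G w' $$ (l,j))"
      using Cons by (simp add: sum.delta Suc_le_eq)
    also have "\<dots> = (B c * G w') $$ (i,j)"
      by (rule mult_entry[symmetric], insert B[of c] G[of w'] i j, auto)
    finally show "ft_mult n F G w $$ (i, j) = (B c * G w') $$ (i, j)" .
  qed (use B[of c] G[of w'] in \<open>auto simp: ft_mult_def\<close>)
  thus ?thesis using Cons by simp
qed

lemma ft_prod_deg1:
  fixes Fs :: "'k::field ftensor list"
  assumes "length Bs = length Fs"
    and "\<And>k w. k < length Fs \<Longrightarrow> (Fs!k) w = (case w of [c] \<Rightarrow> (Bs!k) c | _ \<Rightarrow> 0\<^sub>m n n)"
    and "\<And>k c. k < length Fs \<Longrightarrow> (Bs!k) c \<in> carrier_mat n n"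
  shows "ft_prod n Fs w = (if length w = length Fs then mprod n (map2 (\<lambda>B c. B c) Bs w) else 0\<^sub>m n n)"
  using assms
proof (induct Fs arbitrary: Bs w)
  case Nil
  thus ?case by (auto simp: ft_prod_def ft_one_def)
next
  case (Cons F Fs)
  then obtain B Bs' where Bs: "Bs = B # Bs'" by (cases Bs) auto
  have IH: "ft_prod n Fs w = (if length w = length Fs then mprod n (map2 (\<lambda>B c. B c) Bs' w) else 0\<^sub>m n n)" for w
  proof (rule Cons.hyps)
    show "length Bs' = length Fs" using Cons.prems(1) Bs by simp
    fix k w assume k: "k < length Fs"
    show "(Fs ! k) w = (case w of [c] \<Rightarrow> (Bs'!k) c | _ \<Rightarrow> 0\<^sub>m n n)"
      proof -
      have e: "(B # Bs') ! Suc k = Bs' ! k" by simp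
      show ?thesis using Cons.prems(2)[of "Suc k" w, unfolded Bs e] k by simp
    qed
  next
    fix k c assume k: "k < length Fs"
    show "(Bs'!k) c \<in> carrier_mat n n" using Cons.prems(3)[of "Suc k" c] k by (simp add: Bs)
  qed
  have Bc: "\<And>c. (Bs'!k) c \<in> carrier_mat n n" if "k < length Fs" for k
    using Cons.prems(3)[of "Suc k"] Bs that by auto
  have Gc: "ft_prod n Fs w \<in> carrier_mat n n" for w
    unfolding IH using Bc Cons.prems(1) Bs
    by (auto intro!: mprod_carrier simp: set_zip)
  have B0: "B c \<in> carrier_mat n n" for c using Cons.prems(3)[of 0 c, unfolded Bs] by simp
  have "ft_prod n (F # Fs) w = ft_mult n F (ft_prod n Fs) w" by (simp add: ft_prod_def)
  also have "\<dots> = (case w of [] \<Rightarrow> 0\<^sub>m n n | c # w' \<Rightarrow> B c * ft_prod n Fs w')"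
  proof (rule deg1_mult[where B=B])
    show "F w = (case w of [c] \<Rightarrow> B c | _ \<Rightarrow> 0\<^sub>m n n)" for w
    proof -
      have e: "(B # Bs') ! 0 = B" by simp
      show ?thesis using Cons.prems(2)[of 0 w, unfolded Bs e] by simp
    qed
  qed (rule B0, rule Gc)
  finally have calc: "ft_prod n (F # Fs) w = (case w of [] \<Rightarrow> 0\<^sub>m n n | c # w' \<Rightarrow> B c * ft_prod n Fs w')" .
  show ?case
  proof (cases w)
    case Nil thus ?thesis using calc by simp
  next
    case (Cons c w')
    show ?thesis
    proof (cases "length w' = length Fs")
      case True
      have "ft_prod n (F # Fs) w = B c * ft_prod n Fs w'" using calc unfolding Cons by simp
      also have "\<dots> = B c * mprod n (map2 (\<lambda>B c. B c) Bs' w')" using IH[of w'] True by simp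
      also have "\<dots> = mprod n (map2 (\<lambda>B c. B c) Bs w)" unfolding Bs Cons by simp
      finally show ?thesis using True Cons by simp
    next
      case False
      have "ft_prod n (F # Fs) w = B c * ft_prod n Fs w'" using calc unfolding Cons by simp
      also have "\<dots> = 0\<^sub>m n n" using IH[of w'] False B0[of c] by (simp add: right_mult_zero_mat)
      finally show ?thesis using False Cons by simp
    qed
  qed
qed


definition evm :: "nat \<Rightarrow> 'k::field mat \<Rightarrow> 'k poly \<Rightarrow> 'k mat" where
  "evm n A p = fold_coeffs (\<lambda>a M. a \<cdot>\<^sub>m 1\<^sub>m n + A * M) p (0\<^sub>m n n)"

context fixes n :: nat and A :: "'k::field mat" assumes A: "A \<in> carrier_mat n n"
begin

lemma evm_0[simp]: "evm n A 0 = 0\<^sub>m n n" by (simp add: evm_def)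

lemma evm_pCons: "evm n A (pCons a p) = a \<cdot>\<^sub>m 1\<^sub>m n + A * evm n A p"
proof (cases "p = 0 \<and> a = 0")
  case True
  have "0 \<cdot>\<^sub>m 1\<^sub>m n + A * 0\<^sub>m n n = (0\<^sub>m n n :: 'k mat)"
    by (rule eq_matI) (use A in auto)
  thus ?thesis using True by (simp add: evm_def)
next
  case False thus ?thesis by (auto simp: evm_def)
qed

lemma evm_carrier[simp]: "evm n A p \<in> carrier_mat n n"
  by (induct p) (use A in \<open>auto simp: evm_pCons\<close>)

lemma evm_dims[simp]: "dim_row (evm n A p) = n" "dim_col (evm n A p) = n"
  using evm_carrier[of p] unfolding carrier_mat_def by auto

lemma msum_dims[simp]: "dim_row (msum n S f) = n" "dim_col (msum n S f) = n"
  by (auto simp: msum_def)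

lemma evm_add: "evm n A (p + q) = evm n A p + evm n A q"
proof (induct p q rule: poly_induct2)
  case 0 thus ?case by (rule eq_matI) auto
next
  case (pCons a p b q)
  have "evm n A (pCons a p + pCons b q) = (a + b) \<cdot>\<^sub>m 1\<^sub>m n + A * (evm n A p + evm n A q)"
    by (simp add: evm_pCons pCons)
  also have "\<dots> = (a + b) \<cdot>\<^sub>m 1\<^sub>m n + (A * evm n A p + A * evm n A q)"
    by (simp add: mult_add_distrib_mat[OF A evm_carrier evm_carrier])
  also have "\<dots> = (a \<cdot>\<^sub>m 1\<^sub>m n + A * evm n A p) + (b \<cdot>\<^sub>m 1\<^sub>m n + A * evm n A q)"
    by (rule eq_matI) (use A in \<open>auto simp: algebra_simps\<close>)
  finally show ?case by (simp add: evm_pCons)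
qed

lemma evm_smult: "evm n A (smult c p) = c \<cdot>\<^sub>m evm n A p"
proof (induct p)
  case 0 thus ?case by (rule eq_matI) auto
next
  case (pCons a p)
  have "evm n A (smult c (pCons a p)) = (c * a) \<cdot>\<^sub>m 1\<^sub>m n + A * (c \<cdot>\<^sub>m evm n A p)"
    by (simp add: evm_pCons pCons)
  also have "\<dots> = (c * a) \<cdot>\<^sub>m 1\<^sub>m n + c \<cdot>\<^sub>m (A * evm n A p)"
    by (simp add: mult_smult_distrib[OF A evm_carrier])
  also have "\<dots> = c \<cdot>\<^sub>m (a \<cdot>\<^sub>m 1\<^sub>m n + A * evm n A p)"
    by (rule eq_matI) (use A in \<open>auto simp: algebra_simps\<close>)
  finally show ?case by (simp add: evm_pCons)
qed

lemma evm_mult: "evm n A (p * q) = evm n A p * evm n A q"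
proof (induct p)
  case 0 thus ?case by (simp add: left_mult_zero_mat[OF evm_carrier])
next
  case (pCons a p)
  have "evm n A (pCons a p * q) = a \<cdot>\<^sub>m evm n A q + (0 \<cdot>\<^sub>m 1\<^sub>m n + A * (evm n A p * evm n A q))"
    by (simp add: evm_add evm_smult evm_pCons pCons)
  also have "\<dots> = a \<cdot>\<^sub>m (1\<^sub>m n * evm n A q) + (A * evm n A p) * evm n A q"
    unfolding assoc_mult_mat[OF A evm_carrier evm_carrier, symmetric]
    by (rule eq_matI) (use A in auto)
  also have "\<dots> = (a \<cdot>\<^sub>m 1\<^sub>m n) * evm n A q + (A * evm n A p) * evm n A q"
    by (simp add: mult_smult_assoc_mat[OF one_carrier_mat evm_carrier])
  also have "\<dots> = (a \<cdot>\<^sub>m 1\<^sub>m n + A * evm n A p) * evm n A q"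
    by (rule add_mult_distrib_mat[symmetric]) (use A in auto)
  finally show ?case by (simp add: evm_pCons)
qed

lemma evm_1[simp]: "evm n A 1 = 1\<^sub>m n"
proof -
  have "evm n A 1 = 1 \<cdot>\<^sub>m 1\<^sub>m n + A * 0\<^sub>m n n"
    by (simp add: one_pCons evm_pCons)
  also have "\<dots> = 1\<^sub>m n" by (rule eq_matI) (use A in auto)
  finally show ?thesis .
qed

lemma evm_lin: "evm n A [:- t, 1:] = A - t \<cdot>\<^sub>m 1\<^sub>m n"
proof -
  have "evm n A [:- t, 1:] = (- t) \<cdot>\<^sub>m 1\<^sub>m n + A * (1 \<cdot>\<^sub>m 1\<^sub>m n + A * 0\<^sub>m n n)"
    by (simp add: evm_pCons)
  also have "\<dots> = A - t \<cdot>\<^sub>m 1\<^sub>m n" by (rule eq_matI) (use A in auto)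
  finally show ?thesis .
qed

lemma evm_prod_list: "evm n A (prod_list ps) = mprod n (map (evm n A) ps)"
  by (induct ps) (auto simp: evm_mult)

lemma evm_sum: "finite S \<Longrightarrow> evm n A (\<Sum>k\<in>S. f k) = msum n S (\<lambda>k. evm n A (f k))"
proof (induct S rule: finite_induct)
  case empty thus ?case by (intro eq_matI) auto
next
  case (insert x S)
  show ?case using insert by (intro eq_matI) (auto simp: evm_add)
qed

lemma evm_comm: "evm n A p * evm n A q = evm n A q * evm n A p"
  by (metis evm_mult mult.commute)

end


lemma msum_dims'[simp]: "dim_row (msum n S f) = n" "dim_col (msum n S f) = n"
  by (auto simp: msum_def)

lemma msum_mult_right:
  assumes "\<And>s. s \<in> S \<Longrightarrow> f s \<in> carrier_mat n n" "Y \<in> carrier_mat n n"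
  shows "msum n S f * Y = msum n S (\<lambda>s. f s * Y)"
proof (rule eq_matI)
  fix i j assume ij: "i < dim_row (msum n S (\<lambda>s. f s * Y))" "j < dim_col (msum n S (\<lambda>s. f s * Y))"
  hence i: "i < n" and j: "j < n" by auto
  have "(msum n S f * Y) $$ (i,j) = (\<Sum>l<n. (\<Sum>s\<in>S. f s $$ (i,l)) * Y $$ (l,j))"
    using mult_entry[OF msum_carrier assms(2) i j] i by simp
  also have "\<dots> = (\<Sum>s\<in>S. \<Sum>l<n. f s $$ (i,l) * Y $$ (l,j))"
    by (simp add: sum_distrib_right sum.swap[of _ S])
  also have "\<dots> = (\<Sum>s\<in>S. (f s * Y) $$ (i,j))"
    using assms i j by (intro sum.cong refl, subst mult_entry) auto
  finally show "(msum n S f * Y) $$ (i,j) = msum n S (\<lambda>s. f s * Y) $$ (i,j)" using i j by simp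
qed (use assms in auto)

lemma msum_mult_left:
  assumes "\<And>s. s \<in> S \<Longrightarrow> f s \<in> carrier_mat n n" "Y \<in> carrier_mat n n"
  shows "Y * msum n S f = msum n S (\<lambda>s. Y * f s)"
proof (rule eq_matI)
  fix i j assume ij: "i < dim_row (msum n S (\<lambda>s. Y * f s))" "j < dim_col (msum n S (\<lambda>s. Y * f s))"
  hence i: "i < n" and j: "j < n" by auto
  have "(Y * msum n S f) $$ (i,j) = (\<Sum>l<n. Y $$ (i,l) * (\<Sum>s\<in>S. f s $$ (l,j)))"
    using mult_entry[OF assms(2) msum_carrier i j] j by simp
  also have "\<dots> = (\<Sum>s\<in>S. \<Sum>l<n. Y $$ (i,l) * f s $$ (l,j))"
    by (simp add: sum_distrib_left sum.swap[of _ S])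
  also have "\<dots> = (\<Sum>s\<in>S. (Y * f s) $$ (i,j))"
    using assms i j by (intro sum.cong refl, subst mult_entry) auto
  finally show "(Y * msum n S f) $$ (i,j) = msum n S (\<lambda>s. Y * f s) $$ (i,j)" using i j by simp
qed (use assms in auto)

lemma msum_cong: "(\<And>s. s \<in> S \<Longrightarrow> f s = g s) \<Longrightarrow> msum n S f = msum n S g"
  unfolding msum_def by (auto intro!: arg_cong[where f="mat n n"] sum.cong)

lemma msum_zero: "(\<And>s. s \<in> S \<Longrightarrow> f s = 0\<^sub>m n n) \<Longrightarrow> msum n S f = 0\<^sub>m n n"
  by (rule eq_matI) (auto simp: msum_def)

lemma msum_delta:
  assumes "finite S" "a \<in> S" "X \<in> carrier_mat n n"
  shows "msum n S (\<lambda>s. if s = a then X else 0\<^sub>m n n) = X"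
proof (rule eq_matI)
  fix i j assume "i < dim_row X" "j < dim_col X"
  hence i: "i < n" and j: "j < n" using assms by auto
  have "(\<Sum>s\<in>S. (if s = a then X else 0\<^sub>m n n) $$ (i,j)) = (\<Sum>s\<in>S. if s = a then X $$ (i,j) else 0)"
    using i j by (intro sum.cong) auto
  thus "msum n S (\<lambda>s. if s = a then X else 0\<^sub>m n n) $$ (i,j) = X $$ (i,j)"
    using i j assms by (simp add: sum.delta)
qed (use assms in auto)

lemma msum_filter_const:
  assumes "X \<in> carrier_mat n n" "finite S"
  shows "msum n S (\<lambda>s. if P s then X else 0\<^sub>m n n) = of_nat (card {s\<in>S. P s}) \<cdot>\<^sub>m X"
proof (rule eq_matI)
  fix i j assume "i < dim_row (of_nat (card {s\<in>S. P s}) \<cdot>\<^sub>m X)" "j < dim_col (of_nat (card {s\<in>S. P s}) \<cdot>\<^sub>m X)"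
  hence i: "i < n" and j: "j < n" using assms by auto
  have "(\<Sum>s\<in>S. (if P s then X else 0\<^sub>m n n) $$ (i,j)) = (\<Sum>s\<in>S. if P s then X $$ (i,j) else 0)"
    using i j by (intro sum.cong) auto
  also have "\<dots> = of_nat (card {s\<in>S. P s}) * X $$ (i,j)"
    using assms(2) by (simp add: sum.If_cases Int_def)
  finally show "msum n S (\<lambda>s. if P s then X else 0\<^sub>m n n) $$ (i,j) = (of_nat (card {s\<in>S. P s}) \<cdot>\<^sub>m X) $$ (i,j)"
    using i j assms by simp
qed (use assms in auto)

lemma msum_prod:
  assumes "\<And>s. s \<in> S \<Longrightarrow> f s \<in> carrier_mat n n" "\<And>s. s \<in> T \<Longrightarrow> g s \<in> carrier_mat n n"
  shows "msum n S f * msum n T g = msum n S (\<lambda>s. msum n T (\<lambda>u. f s * g u))"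
proof -
  have "msum n S f * msum n T g = msum n S (\<lambda>s. f s * msum n T g)"
    by (rule msum_mult_right) (use assms in auto)
  also have "\<dots> = msum n S (\<lambda>s. msum n T (\<lambda>u. f s * g u))"
    by (rule msum_cong, rule msum_mult_left) (use assms in auto)
  finally show ?thesis .
qed

fun ws :: "(nat \<Rightarrow> 'k::field) \<Rightarrow> nat \<Rightarrow> nat \<Rightarrow> (nat list \<Rightarrow> 'k) \<Rightarrow> 'k" where
  "ws t d 0 h = h []"
| "ws t d (Suc m) h = (\<Sum>c<d. t c * ws t d m (\<lambda>w. h (c # w)))"

lemma ws_zero: "(\<And>w. length w = m \<Longrightarrow> h w = 0) \<Longrightarrow> ws t d m h = 0"
proof (induct m arbitrary: h)
  case 0 thus ?case by simp
next
  case (Suc m)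
  have "ws t d m (\<lambda>w. h (c # w)) = 0" for c by (rule Suc.hyps) (use Suc.prems in auto)
  thus ?case by simp
qed

lemma ws_sum: "finite S \<Longrightarrow> ws t d m (\<lambda>w. \<Sum>s\<in>S. h s w) = (\<Sum>s\<in>S. ws t d m (h s))"
proof (induct m arbitrary: h)
  case 0 thus ?case by simp
next
  case (Suc m)
  have "ws t d (Suc m) (\<lambda>w. \<Sum>s\<in>S. h s w) = (\<Sum>c<d. t c * (\<Sum>s\<in>S. ws t d m (\<lambda>w. h s (c # w))))"
    using Suc by simp
  also have "\<dots> = (\<Sum>s\<in>S. ws t d (Suc m) (h s))"
    by (simp add: sum_distrib_left sum.swap[of _ S])
  finally show ?case .
qed

lemma ws_scale: "ws t d m (\<lambda>w. a * h w) = a * ws t d m h"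
proof (induct m arbitrary: h)
  case 0 thus ?case by simp
next
  case (Suc m) thus ?case by (simp add: sum_distrib_left algebra_simps)
qed

definition WS :: "(nat \<Rightarrow> 'k::field) \<Rightarrow> nat \<Rightarrow> nat \<Rightarrow> nat \<Rightarrow> (nat list \<Rightarrow> 'k mat) \<Rightarrow> 'k mat" where
  "WS t d n m G = mat n n (\<lambda>(i,j). ws t d m (\<lambda>w. G w $$ (i,j)))"

lemma WS_carrier[simp]: "WS t d n m G \<in> carrier_mat n n" by (simp add: WS_def)
lemma WS_dims[simp]: "dim_row (WS t d n m G) = n" "dim_col (WS t d n m G) = n" by (simp_all add: WS_def)

lemma WS_left:
  assumes M: "M \<in> carrier_mat n n" and G: "\<And>w. G w \<in> carrier_mat n n"
  shows "WS t d n m (\<lambda>w. M * G w) = M * WS t d n m G"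
proof (rule eq_matI)
  fix i j assume "i < dim_row (M * WS t d n m G)" "j < dim_col (M * WS t d n m G)"
  hence i: "i < n" and j: "j < n" using M by auto
  have "WS t d n m (\<lambda>w. M * G w) $$ (i,j) = ws t d m (\<lambda>w. \<Sum>l<n. M $$ (i,l) * G w $$ (l,j))"
    unfolding WS_def using i j mult_entry[OF M G] by simp
  also have "\<dots> = (\<Sum>l<n. M $$ (i,l) * ws t d m (\<lambda>w. G w $$ (l,j)))"
    by (simp add: ws_sum ws_scale)
  also have "\<dots> = (M * WS t d n m G) $$ (i,j)"
    using mult_entry[OF M WS_carrier i j] j by (simp add: WS_def)
  finally show "WS t d n m (\<lambda>w. M * G w) $$ (i,j) = (M * WS t d n m G) $$ (i,j)" .
qed (use M in auto)

lemma WS_prod: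
  assumes "\<And>k c. k < length Bs \<Longrightarrow> (Bs!k) c \<in> carrier_mat n n"
  shows "WS t d n (length Bs) (\<lambda>w. mprod n (map2 (\<lambda>B c. B c) Bs w)) =
         mprod n (map (\<lambda>B. msum n {..<d} (\<lambda>c. t c \<cdot>\<^sub>m B c)) Bs)"
  using assms
proof (induct Bs)
  case Nil
  show ?case by (rule eq_matI) (auto simp: WS_def)
next
  case (Cons B Bs)
  have BsC: "\<And>k c. k < length Bs \<Longrightarrow> (Bs!k) c \<in> carrier_mat n n"
    using Cons.prems[of "Suc _"] by simp
  have BC: "B c \<in> carrier_mat n n" for c using Cons.prems[of 0 c] by simp
  have PC: "mprod n (map2 (\<lambda>B c. B c) Bs w) \<in> carrier_mat n n" for w
    by (rule mprod_carrier) (use BsC in \<open>auto simp: set_zip\<close>)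
  define R where "R = WS t d n (length Bs) (\<lambda>w. mprod n (map2 (\<lambda>B c. B c) Bs w))"
  have IH: "R = mprod n (map (\<lambda>B. msum n {..<d} (\<lambda>c. t c \<cdot>\<^sub>m B c)) Bs)"
    unfolding R_def by (rule Cons.hyps[OF BsC])
  have "WS t d n (length (B # Bs)) (\<lambda>w. mprod n (map2 (\<lambda>B c. B c) (B # Bs) w)) =
        msum n {..<d} (\<lambda>c. t c \<cdot>\<^sub>m B c) * R"
  proof (rule eq_matI)
    fix i j assume "i < dim_row (msum n {..<d} (\<lambda>c. t c \<cdot>\<^sub>m B c) * R)" "j < dim_col (msum n {..<d} (\<lambda>c. t c \<cdot>\<^sub>m B c) * R)"
    hence i: "i < n" and j: "j < n" by (auto simp: R_def)
    have e1: "(B c * mprod n (map2 (\<lambda>B c. B c) Bs w)) $$ (i,j) =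
        (\<Sum>l<n. B c $$ (i,l) * mprod n (map2 (\<lambda>B c. B c) Bs w) $$ (l,j))" for c w
      by (rule mult_entry[OF BC PC i j])
    have "WS t d n (length (B # Bs)) (\<lambda>w. mprod n (map2 (\<lambda>B c. B c) (B # Bs) w)) $$ (i,j)
       = (\<Sum>c<d. t c * ws t d (length Bs) (\<lambda>w. (B c * mprod n (map2 (\<lambda>B c. B c) Bs w)) $$ (i,j)))"
      unfolding WS_def using i j by simp
    also have "\<dots> = (\<Sum>c<d. t c * (\<Sum>l<n. B c $$ (i,l) * R $$ (l,j)))"
      unfolding e1 ws_sum[OF finite_lessThan] ws_scale
      by (intro sum.cong refl arg_cong2[where f="(*)"]) (use j in \<open>simp add: R_def WS_def\<close>)
    also have "\<dots> = (\<Sum>l<n. (\<Sum>c<d. t c * B c $$ (i,l)) * R $$ (l,j))"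
      by (simp add: sum_distrib_left sum_distrib_right sum.swap[of _ "{..<d}"] algebra_simps)
    also have "\<dots> = (\<Sum>l<n. msum n {..<d} (\<lambda>c. t c \<cdot>\<^sub>m B c) $$ (i,l) * R $$ (l,j))"
      using BC unfolding carrier_mat_def by (intro sum.cong refl) (use i in simp)
    also have "\<dots> = (msum n {..<d} (\<lambda>c. t c \<cdot>\<^sub>m B c) * R) $$ (i,j)"
      by (rule mult_entry[symmetric]) (auto simp: R_def i j)
    finally show "WS t d n (length (B # Bs)) (\<lambda>w. mprod n (map2 (\<lambda>B c. B c) (B # Bs) w)) $$ (i,j)
       = (msum n {..<d} (\<lambda>c. t c \<cdot>\<^sub>m B c) * R) $$ (i,j)" .
  qed (auto simp: WS_def R_def)
  thus ?case using IH by simp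
qed


definition chiP :: "(nat \<Rightarrow> 'k::field) \<Rightarrow> nat \<Rightarrow> 'k poly" where
  "chiP t d = (\<Prod>k<d. [:- t k, 1:])"
definition Qp :: "(nat \<Rightarrow> 'k::field) \<Rightarrow> nat \<Rightarrow> nat \<Rightarrow> 'k poly" where
  "Qp t d j = (\<Prod>k\<in>{..<d}-{j}. [:- t k, 1:])"
definition gam :: "(nat \<Rightarrow> 'k::field) \<Rightarrow> nat \<Rightarrow> nat \<Rightarrow> 'k" where
  "gam t d j = (\<Prod>k\<in>{..<d}-{j}. (t j - t k))"

lemma Qp_lin: "j < d \<Longrightarrow> [:- t j, 1:] * Qp t d j = chiP t d"
  unfolding chiP_def Qp_def by (simp add: prod.remove[of "{..<d}" j])

lemma Qp_mult_ne: assumes "j < d" "m < d" "j \<noteq> m"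
  shows "\<exists>r. Qp t d j * Qp t d m = chiP t d * r"
proof -
  have "Qp t d m = [:- t j, 1:] * (\<Prod>k\<in>{..<d}-{m}-{j}. [:- t k, 1:])"
    unfolding Qp_def using assms by (subst prod.remove[of _ j]) auto
  hence "Qp t d j * Qp t d m = ([:- t j, 1:] * Qp t d j) * (\<Prod>k\<in>{..<d}-{m}-{j}. [:- t k, 1:])"
    by (simp only: mult_ac)
  hence "Qp t d j * Qp t d m = chiP t d * (\<Prod>k\<in>{..<d}-{m}-{j}. [:- t k, 1:])"
    unfolding Qp_lin[OF assms(1), of t] .
  thus ?thesis by blast
qed

lemma poly_Qp: "poly (Qp t d m) x = (\<Prod>k\<in>{..<d}-{m}. (x - t k))"
  unfolding Qp_def by (simp add: poly_prod)

lemma gam_poly: "gam t d m = poly (Qp t d m) (t m)"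
  unfolding gam_def poly_Qp ..

lemma Qp_sq: assumes "m < d"
  shows "\<exists>r. Qp t d m * Qp t d m = smult (gam t d m) (Qp t d m) + chiP t d * r"
proof -
  have "poly (Qp t d m - [:gam t d m:]) (t m) = 0" by (simp add: gam_poly)
  then obtain r where r: "Qp t d m - [:gam t d m:] = [:- t m, 1:] * r"
    unfolding poly_eq_0_iff_dvd by (auto elim: dvdE)
  have r': "Qp t d m = [:gam t d m:] + [:- t m, 1:] * r" using r by (simp add: algebra_simps)
  have "Qp t d m * Qp t d m = Qp t d m * ([:gam t d m:] + [:- t m, 1:] * r)"
    by (subst (2) r', rule refl)
  also have "\<dots> = [:gam t d m:] * Qp t d m + ([:- t m, 1:] * Qp t d m) * r"
    by (simp only: distrib_left mult_ac)
  also have "\<dots> = smult (gam t d m) (Qp t d m) + chiP t d * r"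
    unfolding Qp_lin[OF assms, of t] by simp
  finally show ?thesis by blast
qed

lemma gam_nz: assumes "inj_on t {..<d}" "m < d" shows "gam t d m \<noteq> 0"
  unfolding gam_def using assms by (auto simp: inj_on_def)

lemma poly_Qp_other: assumes "j < d" "m < d" "j \<noteq> m" shows "poly (Qp t d m) (t j) = 0"
  unfolding poly_Qp using assms by (intro prod_zero) auto

lemma degree_Qp: "m < d \<Longrightarrow> degree (Qp t d m) \<le> d - 1"
proof -
  assume "m < d"
  have "degree (Qp t d m) \<le> sum (degree \<circ> (\<lambda>k. [:- t k, 1:])) ({..<d}-{m})"
    unfolding Qp_def by (rule degree_prod_sum_le) simp
  also have "\<dots> = card ({..<d}-{m})" by simp
  also have "\<dots> \<le> d - 1"
    using \<open>m < d\<close> by (auto simp: card_Diff_singleton_if)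
  finally show ?thesis .
qed

lemma lagrange:
  assumes inj: "inj_on t {..<d}" and d: "d \<ge> 1"
  shows "(\<Sum>m<d. smult (inverse (gam t d m)) (Qp t d m)) = 1"
proof (rule poly_eqI_degree[where A="t ` {..<d}"])
  fix x assume "x \<in> t ` {..<d}"
  then obtain j where j: "j < d" and x: "x = t j" by auto
  have "poly (\<Sum>m<d. smult (inverse (gam t d m)) (Qp t d m)) x =
        (\<Sum>m<d. inverse (gam t d m) * poly (Qp t d m) (t j))"
    by (simp add: poly_sum x)
  also have "\<dots> = (\<Sum>m<d. if m = j then 1 else 0)"
    by (rule sum.cong) (use j gam_nz[OF inj] poly_Qp_other[of j d] in \<open>auto simp: gam_poly[symmetric]\<close>)
  also have "\<dots> = 1" using j by simp
  finally show "poly (\<Sum>m<d. smult (inverse (gam t d m)) (Qp t d m)) x = poly 1 x" by simp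
next
  have "card (t ` {..<d}) = d" using inj by (simp add: card_image)
  moreover have "degree (\<Sum>m<d. smult (inverse (gam t d m)) (Qp t d m)) \<le> d - 1"
  proof (rule degree_sum_le)
    fix m assume "m \<in> {..<d}"
    thus "degree (smult (inverse (gam t d m)) (Qp t d m)) \<le> d - 1"
      using degree_Qp[of m d t] degree_smult_le[of _ "Qp t d m"] by (meson order.trans lessThan_iff)
  qed simp
  ultimately show "degree (\<Sum>m<d. smult (inverse (gam t d m)) (Qp t d m)) < card (t ` {..<d})"
    using d by linarith
  show "degree (1::'a poly) < card (t ` {..<d})" using \<open>card (t ` {..<d}) = d\<close> d by simp
qed


locale setupB =
  fixes \<phi> :: "'k::field vec \<Rightarrow> 'k mat" and d n :: nat
  assumes into: "\<forall>a\<in>carrier_vec d. \<phi> a \<in> carrier_mat n n"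
    and add: "\<forall>a\<in>carrier_vec d. \<forall>b\<in>carrier_vec d. \<phi> (a + b) = \<phi> a + \<phi> b"
    and smult: "\<forall>c. \<forall>a\<in>carrier_vec d. \<phi> (c \<cdot>\<^sub>v a) = c \<cdot>\<^sub>m \<phi> a"
begin

definition al :: "nat \<Rightarrow> 'k mat" where "al c = \<phi> (unit_vec d c)"

lemma al_carrier[simp]: "al c \<in> carrier_mat n n"
  unfolding al_def using into by simp

lemma al_dims[simp]: "dim_row (al c) = n" "dim_col (al c) = n"
  using al_carrier[of c] unfolding carrier_mat_def by auto

definition Bm :: "(nat \<Rightarrow> nat) \<Rightarrow> nat \<Rightarrow> nat \<Rightarrow> 'k mat" where
  "Bm \<sigma> k c = (if c < d then al c else 0\<^sub>m n n) - (if c = \<sigma> k then 1\<^sub>m n else 0\<^sub>m n n)"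

lemma Bm_carrier[simp]: "Bm \<sigma> k c \<in> carrier_mat n n"
  unfolding Bm_def by auto

lemma ft_sub_deg1: "ft_sub n (T_phi n d \<phi>) (ft_gen n s) w =
   (case w of [c] \<Rightarrow> (if c < d then al c else 0\<^sub>m n n) - (if c = s then 1\<^sub>m n else 0\<^sub>m n n) | _ \<Rightarrow> 0\<^sub>m n n)"
proof (cases w)
  case Nil thus ?thesis by (auto simp: ft_sub_def T_phi_def ft_gen_def intro!: eq_matI)
next
  case (Cons c w')
  show ?thesis
  proof (cases w')
    case Nil
    show ?thesis unfolding Cons Nil
      by (rule eq_matI) (auto simp: ft_sub_def T_phi_def ft_gen_def al_def[symmetric])
  next
    case (Cons c' w'')
    show ?thesis unfolding \<open>w = c # w'\<close> Cons
      by (rule eq_matI) (auto simp: ft_sub_def T_phi_def ft_gen_def)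
  qed
qed

definition Perm :: "(nat \<Rightarrow> nat) set" where "Perm = {\<sigma>. \<sigma> permutes {..<d}}"

lemma finite_Perm[simp]: "finite Perm"
  unfolding Perm_def by (rule finite_permutations) simp

definition coef :: "(nat \<Rightarrow> nat) \<Rightarrow> nat list \<Rightarrow> 'k mat" where
  "coef \<sigma> w = mprod n (map2 (\<lambda>B c. B c) (map (Bm \<sigma>) [0..<d]) w)"

lemma coef_carrier[simp]: "coef \<sigma> w \<in> carrier_mat n n"
  unfolding coef_def by (rule mprod_carrier) (auto simp: set_zip)

lemma chi_eq: "chi_d n d (T_phi n d \<phi>) w =
  msum n Perm (\<lambda>\<sigma>. if length w = d then coef \<sigma> w else 0\<^sub>m n n)"
proof -
  have "ft_prod n (map (\<lambda>k. ft_sub n (T_phi n d \<phi>) (ft_gen n (\<sigma> k))) [0..<d]) w =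
     (if length w = length (map (\<lambda>k. ft_sub n (T_phi n d \<phi>) (ft_gen n (\<sigma> k))) [0..<d])
      then mprod n (map2 (\<lambda>B c. B c) (map (Bm \<sigma>) [0..<d]) w) else 0\<^sub>m n n)" for \<sigma>
  proof (rule ft_prod_deg1)
    fix k w assume k: "k < length (map (\<lambda>k. ft_sub n (T_phi n d \<phi>) (ft_gen n (\<sigma> k))) [0..<d])"
    hence k': "k < d" by simp
    have e1: "map (\<lambda>k. ft_sub n (T_phi n d \<phi>) (ft_gen n (\<sigma> k))) [0..<d] ! k = ft_sub n (T_phi n d \<phi>) (ft_gen n (\<sigma> k))"
      using k' by simp
    have e2: "map (Bm \<sigma>) [0..<d] ! k = Bm \<sigma> k" using k' by simp
    show "(map (\<lambda>k. ft_sub n (T_phi n d \<phi>) (ft_gen n (\<sigma> k))) [0..<d] ! k) w =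
      (case w of [c] \<Rightarrow> (map (Bm \<sigma>) [0..<d] ! k) c | _ \<Rightarrow> 0\<^sub>m n n)"
      unfolding e1 e2 ft_sub_deg1 Bm_def by (rule refl)
  qed auto
  thus ?thesis
    unfolding chi_d_def ft_sum_def msum_def Perm_def coef_def by simp
qed

lemma chi_zero_iff: "chi_d n d (T_phi n d \<phi>) = ft_zero n \<longleftrightarrow>
  (\<forall>w. length w = d \<longrightarrow> msum n Perm (\<lambda>\<sigma>. coef \<sigma> w) = 0\<^sub>m n n)"
proof
  assume H: "chi_d n d (T_phi n d \<phi>) = ft_zero n"
  show "\<forall>w. length w = d \<longrightarrow> msum n Perm (\<lambda>\<sigma>. coef \<sigma> w) = 0\<^sub>m n n"
  proof (intro allI impI)
    fix w :: "nat list" assume "length w = d"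
    thus "msum n Perm (\<lambda>\<sigma>. coef \<sigma> w) = 0\<^sub>m n n"
      using fun_cong[OF H, of w] unfolding chi_eq ft_zero_def by simp
  qed
next
  assume H: "\<forall>w. length w = d \<longrightarrow> msum n Perm (\<lambda>\<sigma>. coef \<sigma> w) = 0\<^sub>m n n"
  show "chi_d n d (T_phi n d \<phi>) = ft_zero n"
  proof
    fix w :: "nat list"
    show "chi_d n d (T_phi n d \<phi>) w = ft_zero n w"
      unfolding chi_eq ft_zero_def using H by (cases "length w = d") (auto intro: msum_zero)
  qed
qed

end


lemma mprod_eig:
  assumes "length cs = length Xs" "\<forall>X\<in>set Xs. X \<in> carrier_mat n n" "E \<in> carrier_mat n n"
    "\<forall>i<length Xs. Xs!i * E = cs!i \<cdot>\<^sub>m E"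
  shows "mprod n Xs * E = prod_list cs \<cdot>\<^sub>m (E :: 'k::field mat)"
  using assms
proof (induct cs Xs rule: list_induct2)
  case Nil thus ?case by (intro eq_matI) auto
next
  case (Cons c cs X Xs)
  have XC: "X \<in> carrier_mat n n" and XsC: "\<forall>X\<in>set Xs. X \<in> carrier_mat n n" using Cons.prems by auto
  have XE: "X * E = c \<cdot>\<^sub>m E" using Cons.prems(3)[rule_format, of 0] by simp
  have IH: "mprod n Xs * E = prod_list cs \<cdot>\<^sub>m E"
  proof (rule Cons.hyps(2)[OF XsC Cons.prems(2)], intro allI impI)
    fix i assume "i < length Xs"
    thus "Xs ! i * E = cs ! i \<cdot>\<^sub>m E" using Cons.prems(3)[rule_format, of "Suc i"] by simp
  qed
  have "mprod n (X # Xs) * E = X * (mprod n Xs * E)"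
    using XC XsC Cons.prems(2) by (simp add: assoc_mult_mat[OF XC mprod_carrier[OF XsC]])
  also have "\<dots> = prod_list cs \<cdot>\<^sub>m (X * E)"
    unfolding IH using XC Cons.prems(2) by (simp add: mult_smult_distrib)
  also have "\<dots> = prod_list (c # cs) \<cdot>\<^sub>m E"
    unfolding XE by (intro eq_matI) (use Cons.prems(2) in auto)
  finally show ?case .
qed

context setupB begin

definition OI :: bool where
  "OI \<longleftrightarrow> (\<forall>i<d. \<forall>j<d. al i * al j = (if i = j then al i else 0\<^sub>m n n)) \<and> msum n {..<d} al = 1\<^sub>m n"

lemma coef_as_map: "length w = d \<Longrightarrow> map2 (\<lambda>B c. B c) (map (Bm \<sigma>) [0..<d]) w = map (\<lambda>k. Bm \<sigma> k (w!k)) [0..<d]"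
  by (rule nth_equalityI) auto

lemma coef_zero:
  assumes OI: OI and \<sigma>: "\<sigma> \<in> Perm" and w: "length w = d"
  shows "coef \<sigma> w = 0\<^sub>m n n"
proof -
  have OI1: "\<And>i j. i < d \<Longrightarrow> j < d \<Longrightarrow> al i * al j = (if i = j then al i else 0\<^sub>m n n)"
    and OI2: "msum n {..<d} al = 1\<^sub>m n" using OI unfolding OI_def by auto
  have perm: "\<sigma> permutes {..<d}" using \<sigma> unfolding Perm_def by simp
  define Xs where "Xs = map (\<lambda>k. Bm \<sigma> k (w!k)) [0..<d]"
  have cw: "coef \<sigma> w = mprod n Xs" unfolding coef_def Xs_def coef_as_map[OF w] ..
  have XsC: "\<forall>X\<in>set Xs. X \<in> carrier_mat n n" unfolding Xs_def by auto
  have zj: "coef \<sigma> w * al j = 0\<^sub>m n n" if j: "j < d" for j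
  proof -
    define cs where "cs = map (\<lambda>k. (if w!k < d \<and> w!k = j then 1 else 0) - (if w!k = \<sigma> k then 1 else (0::'k))) [0..<d]"
    have eig: "\<forall>i<length Xs. Xs!i * al j = cs!i \<cdot>\<^sub>m al j"
    proof (intro allI impI)
      fix k assume "k < length Xs"
      hence k: "k < d" unfolding Xs_def by simp
      have sk: "\<sigma> k < d" using permutes_in_image[OF perm, of k] k by simp
      show "Xs!k * al j = cs!k \<cdot>\<^sub>m al j"
      proof (cases "w!k < d")
        case True
        have "Xs!k * al j = al (w!k) * al j - (if w!k = \<sigma> k then 1\<^sub>m n else 0\<^sub>m n n) * al j"
        proof -
          have "Xs!k = al (w!k) - (if w!k = \<sigma> k then 1\<^sub>m n else 0\<^sub>m n n)"
            unfolding Xs_def Bm_def using k True by simp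
          thus ?thesis by (simp only:, intro minus_mult_distrib_mat) auto
        qed
        also have "\<dots> = cs!k \<cdot>\<^sub>m al j"
          unfolding cs_def using k True j OI1[OF True j]
          by (cases "w!k = j"; cases "w!k = \<sigma> k") (auto intro!: eq_matI)
        finally show ?thesis .
      next
        case False
        hence ne: "w!k \<noteq> \<sigma> k" using sk by auto
        have "Xs!k * al j = 0\<^sub>m n n"
        proof -
          have z: "0\<^sub>m n n - 0\<^sub>m n n = (0\<^sub>m n n :: 'k mat)" by (intro eq_matI) auto
          show ?thesis unfolding Xs_def Bm_def using k False ne
            by (simp add: z left_mult_zero_mat[OF al_carrier])
        qed
        also have "\<dots> = cs!k \<cdot>\<^sub>m al j"
          unfolding cs_def using k False ne by (auto intro!: eq_matI)
        finally show ?thesis .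
      qed
    qed
    have "j \<in> \<sigma> ` {..<d}" using permutes_image[OF perm] j by simp
    then obtain k0 where k0: "k0 < d" "\<sigma> k0 = j" by auto
    have "cs ! k0 = 0" unfolding cs_def using k0 j by auto
    moreover have "cs ! k0 \<in> set cs" by (rule nth_mem) (simp add: cs_def k0)
    ultimately have "0 \<in> set cs" by simp
    hence "prod_list cs = 0" by (simp add: prod_list_zero_iff)
    moreover have "mprod n Xs * al j = prod_list cs \<cdot>\<^sub>m al j"
      by (rule mprod_eig) (use XsC eig in \<open>auto simp: cs_def Xs_def\<close>)
    ultimately show ?thesis unfolding cw by (intro eq_matI) auto
  qed
  have "coef \<sigma> w = coef \<sigma> w * msum n {..<d} al" unfolding OI2 by (simp add: right_mult_one_mat[OF coef_carrier])
  also have "\<dots> = msum n {..<d} (\<lambda>j. coef \<sigma> w * al j)"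
    by (rule msum_mult_left) auto
  also have "\<dots> = 0\<^sub>m n n" by (rule msum_zero) (use zj in auto)
  finally show ?thesis .
qed

lemma OI_chi: assumes OI shows "chi_d n d (T_phi n d \<phi>) = ft_zero n"
  unfolding chi_zero_iff
proof (intro allI impI msum_zero)
  fix w :: "nat list" and \<sigma> assume "length w = d" "\<sigma> \<in> Perm"
  thus "coef \<sigma> w = 0\<^sub>m n n" by (intro coef_zero[OF assms])
qed

end


lemma fact_nz:
  assumes "CHAR('k::field) = 0 \<or> d < CHAR('k)" "m \<le> d"
  shows "of_nat (fact m) \<noteq> (0::'k)"
proof
  assume "of_nat (fact m) = (0::'k)"
  hence dv: "CHAR('k) dvd fact m" by (simp add: of_nat_eq_0_iff_char_dvd)
  show False
  proof (cases "CHAR('k) = 0")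
    case True thus False using dv by simp
  next
    case False
    hence "prime CHAR('k)" by (intro prime_CHAR_semidom) simp
    hence "CHAR('k) \<le> m" using dv prime_dvd_fact_iff by blast
    thus False using assms False by linarith
  qed
qed

lemma of_nat_inj_char:
  assumes "CHAR('k::field) = 0 \<or> d < CHAR('k)"
  shows "inj_on (of_nat :: nat \<Rightarrow> 'k) {..<d}"
proof (rule inj_onI)
  have key: "a = b" if ab: "a \<le> b" "b < d" "of_nat a = (of_nat b :: 'k)" for a b
  proof (rule ccontr)
    assume "a \<noteq> b"
    hence pos: "0 < b - a" using ab by simp
    have "of_nat (b - a) = (of_nat b - of_nat a :: 'k)" using ab by (simp add: of_nat_diff)
    hence "of_nat (b - a) = (0::'k)" using ab by simp
    hence dv: "CHAR('k) dvd (b - a)" by (simp add: of_nat_eq_0_iff_char_dvd)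
    show False
    proof (cases "CHAR('k) = 0")
      case True thus False using dv pos by simp
    next
      case False
      hence "CHAR('k) \<le> b - a" using dv pos by (simp add: dvd_imp_le)
      thus False using assms False ab by linarith
    qed
  qed
  fix a b assume "a \<in> {..<d}" "b \<in> {..<d}" "of_nat a = (of_nat b :: 'k)"
  thus "a = b" using key[of a b] key[of b a] by (cases "a \<le> b") auto
qed

context setupB begin

lemma card_Perm: "card Perm = fact d"
  unfolding Perm_def by (rule card_permutations) auto

lemma card_Perm_fix:
  assumes m: "m < d"
  shows "card {\<sigma>\<in>Perm. \<sigma> 0 = m} = fact (d - 1)"
proof -
  have d: "0 < d" using m by simp
  have ins: "{..<d} = insert 0 {1..<d}" using d by auto
  define f where "f = (\<lambda>\<tau>::nat\<Rightarrow>nat. transpose 0 m \<circ> \<tau>)"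
  have "bij_betw f {\<tau>. \<tau> permutes {1..<d}} {\<sigma>\<in>Perm. \<sigma> 0 = m}"
  proof (rule bij_betw_byWitness[where f'=f])
    show "\<forall>a\<in>{\<tau>. \<tau> permutes {1..<d}}. f (f a) = a"
      by (auto simp: f_def fun_eq_iff)
    show "\<forall>a\<in>{\<sigma>\<in>Perm. \<sigma> 0 = m}. f (f a) = a"
      by (auto simp: f_def fun_eq_iff)
    show "f ` {\<tau>. \<tau> permutes {1..<d}} \<subseteq> {\<sigma>\<in>Perm. \<sigma> 0 = m}"
    proof
      fix \<sigma> assume "\<sigma> \<in> f ` {\<tau>. \<tau> permutes {1..<d}}"
      then obtain \<tau> where \<tau>: "\<tau> permutes {1..<d}" and s: "\<sigma> = f \<tau>" by auto
      have "\<tau> permutes {..<d}" by (rule permutes_subset[OF \<tau>]) auto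
      moreover have "transpose 0 m permutes {..<d}" by (rule permutes_swap_id) (use d m in auto)
      ultimately have "\<sigma> permutes {..<d}" unfolding s f_def by (rule permutes_compose)
      moreover have "\<tau> 0 = 0" by (rule permutes_not_in[OF \<tau>]) simp
      ultimately show "\<sigma> \<in> {\<sigma>\<in>Perm. \<sigma> 0 = m}" unfolding Perm_def s f_def by simp
    qed
    show "f ` {\<sigma>\<in>Perm. \<sigma> 0 = m} \<subseteq> {\<tau>. \<tau> permutes {1..<d}}"
    proof
      fix \<tau> assume "\<tau> \<in> f ` {\<sigma>\<in>Perm. \<sigma> 0 = m}"
      then obtain \<sigma> where \<sigma>: "\<sigma> permutes {..<d}" "\<sigma> 0 = m" and s: "\<tau> = f \<sigma>" by (auto simp: Perm_def)
      have "transpose 0 m permutes {..<d}" by (rule permutes_swap_id) (use d m in auto)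
      hence p1: "\<tau> permutes insert 0 {1..<d}" unfolding s f_def ins[symmetric] by (rule permutes_compose[OF \<sigma>(1)])
      have "\<tau> 0 = 0" unfolding s f_def using \<sigma>(2) by simp
      have "transpose 0 (\<tau> 0) \<circ> \<tau> permutes {1..<d}" by (rule permutes_insert_lemma[OF p1])
      thus "\<tau> \<in> {\<tau>. \<tau> permutes {1..<d}}" using \<open>\<tau> 0 = 0\<close> by simp
    qed
  qed
  hence "card {\<sigma>\<in>Perm. \<sigma> 0 = m} = card {\<tau>. \<tau> permutes {1..<d}}"
    by (simp add: bij_betw_same_card)
  also have "\<dots> = fact (d - 1)" by (rule card_permutations) auto
  finally show ?thesis .
qed

end


lemma prod_list_upt_set: "prod_list (map g [a..<b]) = (\<Prod>k\<in>{a..<b}. (g k :: 'a::comm_monoid_mult))"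
  by (simp add: prod.distinct_set_conv_list[symmetric])

lemma prod_perm_all:
  assumes "\<sigma> permutes {..<d}"
  shows "prod_list (map (\<lambda>k. f (\<sigma> k)) [0..<d]) = (\<Prod>k<d. (f k :: 'a::comm_monoid_mult))"
proof -
  have "prod_list (map (\<lambda>k. f (\<sigma> k)) [0..<d]) = (\<Prod>k\<in>{..<d}. f (\<sigma> k))"
    by (simp add: prod_list_upt_set atLeast0LessThan)
  also have "\<dots> = prod f (\<sigma> ` {..<d})"
    by (rule prod.reindex[symmetric, unfolded o_def]) (rule permutes_inj_on[OF assms])
  also have "\<sigma> ` {..<d} = {..<d}" by (rule permutes_image[OF assms])
  finally show ?thesis .
qed

lemma prod_perm_tail:
  assumes "\<sigma> permutes {..<d}"
  shows "prod_list (map (\<lambda>k. f (\<sigma> k)) [1..<d]) = (\<Prod>k\<in>{..<d}-{\<sigma> 0}. (f k :: 'a::comm_monoid_mult))"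
proof -
  have "prod_list (map (\<lambda>k. f (\<sigma> k)) [1..<d]) = (\<Prod>k\<in>{1..<d}. f (\<sigma> k))"
    by (simp add: prod_list_upt_set)
  also have "\<dots> = prod f (\<sigma> ` {1..<d})"
    by (rule prod.reindex[symmetric, unfolded o_def]) (rule inj_on_subset[OF permutes_inj_on[OF assms]], auto)
  also have "\<sigma> ` {1..<d} = {..<d} - {\<sigma> 0}"
  proof -
    have "{1..<d} = {..<d} - {0}" by auto
    hence "\<sigma> ` {1..<d} = \<sigma> ` {..<d} - \<sigma> ` {0}"
      using permutes_inj[OF assms] by (simp add: image_set_diff)
    thus ?thesis using permutes_image[OF assms] by simp
  qed
  finally show ?thesis .
qed

context setupB begin

definition tt :: "nat \<Rightarrow> 'k" where "tt c = of_nat c"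

definition AA :: "'k mat" where "AA = msum n {..<d} (\<lambda>c. tt c \<cdot>\<^sub>m al c)"

lemma AA_carrier[simp]: "AA \<in> carrier_mat n n" unfolding AA_def by simp

lemma msumB:
  assumes sk: "\<sigma> k < d"
  shows "msum n {..<d} (\<lambda>c. tt c \<cdot>\<^sub>m Bm \<sigma> k c) = evm n AA [:- tt (\<sigma> k), 1:]"
  unfolding evm_lin[OF AA_carrier]
proof (rule eq_matI)
  fix i j assume "i < dim_row (AA - tt (\<sigma> k) \<cdot>\<^sub>m 1\<^sub>m n)" "j < dim_col (AA - tt (\<sigma> k) \<cdot>\<^sub>m 1\<^sub>m n)"
  hence i: "i < n" and j: "j < n" by auto
  have "msum n {..<d} (\<lambda>c. tt c \<cdot>\<^sub>m Bm \<sigma> k c) $$ (i,j) =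
        (\<Sum>c<d. tt c * al c $$ (i,j) - (if c = \<sigma> k then tt c * (if i = j then 1 else 0) else 0))"
    using i j by (intro trans[OF index_msum] sum.cong) (auto simp: Bm_def algebra_simps)
  also have "\<dots> = (\<Sum>c<d. tt c * al c $$ (i,j)) - tt (\<sigma> k) * (if i = j then 1 else 0)"
    using sk by (simp add: sum_subtractf sum.delta)
  also have "\<dots> = (AA - tt (\<sigma> k) \<cdot>\<^sub>m 1\<^sub>m n) $$ (i,j)"
    using i j unfolding AA_def by simp
  finally show "msum n {..<d} (\<lambda>c. tt c \<cdot>\<^sub>m Bm \<sigma> k c) $$ (i,j) = (AA - tt (\<sigma> k) \<cdot>\<^sub>m 1\<^sub>m n) $$ (i,j)" .
qed auto

lemma perm_lt: "\<sigma> \<in> Perm \<Longrightarrow> k < d \<Longrightarrow> \<sigma> k < d"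
  unfolding Perm_def using permutes_in_image by fastforce

lemma WS_coef:
  assumes \<sigma>: "\<sigma> \<in> Perm"
  shows "WS tt d n d (coef \<sigma>) = evm n AA (chiP tt d)"
proof -
  have perm: "\<sigma> permutes {..<d}" using \<sigma> by (simp add: Perm_def)
  have "WS tt d n d (coef \<sigma>) = WS tt d n (length (map (Bm \<sigma>) [0..<d]))
          (\<lambda>w. mprod n (map2 (\<lambda>B c. B c) (map (Bm \<sigma>) [0..<d]) w))"
    unfolding coef_def[abs_def] by simp
  also have "\<dots> = mprod n (map (\<lambda>B. msum n {..<d} (\<lambda>c. tt c \<cdot>\<^sub>m B c)) (map (Bm \<sigma>) [0..<d]))"
    by (rule WS_prod) auto
  also have "\<dots> = mprod n (map (evm n AA) (map (\<lambda>k. [:- tt (\<sigma> k), 1:]) [0..<d]))"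
    unfolding map_map by (rule arg_cong[where f="mprod n"], rule map_cong[OF refl]) (simp add: msumB perm_lt[OF \<sigma>])
  also have "\<dots> = evm n AA (prod_list (map (\<lambda>k. [:- tt (\<sigma> k), 1:]) [0..<d]))"
    by (rule evm_prod_list[OF AA_carrier, symmetric])
  also have "prod_list (map (\<lambda>k. [:- tt (\<sigma> k), 1:]) [0..<d]) = chiP tt d"
    unfolding chiP_def by (rule prod_perm_all[OF perm])
  finally show ?thesis .
qed

lemma rel_i:
  assumes char: "CHAR('k) = 0 \<or> d < CHAR('k)"
    and H: "\<forall>w. length w = d \<longrightarrow> msum n Perm (\<lambda>\<sigma>. coef \<sigma> w) = 0\<^sub>m n n"
  shows "evm n AA (chiP tt d) = 0\<^sub>m n n"
proof (rule eq_matI)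
  fix a b assume "a < dim_row (0\<^sub>m n n :: 'k mat)" "b < dim_col (0\<^sub>m n n :: 'k mat)"
  hence a: "a < n" and b: "b < n" by auto
  have "0 = ws tt d d (\<lambda>w. msum n Perm (\<lambda>\<sigma>. coef \<sigma> w) $$ (a,b))"
    by (rule ws_zero[symmetric]) (use H a b in auto)
  also have "\<dots> = ws tt d d (\<lambda>w. \<Sum>\<sigma>\<in>Perm. coef \<sigma> w $$ (a,b))"
    using a b by simp
  also have "\<dots> = (\<Sum>\<sigma>\<in>Perm. ws tt d d (\<lambda>w. coef \<sigma> w $$ (a,b)))"
    by (rule ws_sum) simp
  also have "\<dots> = (\<Sum>\<sigma>\<in>Perm. WS tt d n d (coef \<sigma>) $$ (a,b))"
    using a b by (simp add: WS_def)
  also have "\<dots> = (\<Sum>\<sigma>\<in>Perm. evm n AA (chiP tt d) $$ (a,b))"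
    by (rule sum.cong) (simp_all add: WS_coef)
  also have "\<dots> = of_nat (fact d) * evm n AA (chiP tt d) $$ (a,b)"
    by (simp add: card_Perm)
  finally have "of_nat (fact d) * evm n AA (chiP tt d) $$ (a,b) = 0" by simp
  thus "evm n AA (chiP tt d) $$ (a,b) = 0\<^sub>m n n $$ (a,b)"
    using fact_nz[OF char, of d] a b by simp
qed auto

end


context setupB begin

definition coef' :: "(nat \<Rightarrow> nat) \<Rightarrow> nat list \<Rightarrow> 'k mat" where
  "coef' \<sigma> w = mprod n (map2 (\<lambda>B c. B c) (map (Bm \<sigma>) [1..<d]) w)"

lemma coef'_carrier[simp]: "coef' \<sigma> w \<in> carrier_mat n n"
  unfolding coef'_def by (rule mprod_carrier) (auto simp: set_zip)

lemma coef_cons: "0 < d \<Longrightarrow> coef \<sigma> (c # w) = Bm \<sigma> 0 c * coef' \<sigma> w"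
  unfolding coef_def coef'_def by (simp add: upt_conv_Cons)

lemma WS_coef':
  assumes \<sigma>: "\<sigma> \<in> Perm"
  shows "WS tt d n (d - 1) (coef' \<sigma>) = evm n AA (Qp tt d (\<sigma> 0))"
proof -
  have perm: "\<sigma> permutes {..<d}" using \<sigma> by (simp add: Perm_def)
  have "WS tt d n (d - 1) (coef' \<sigma>) = WS tt d n (length (map (Bm \<sigma>) [1..<d]))
          (\<lambda>w. mprod n (map2 (\<lambda>B c. B c) (map (Bm \<sigma>) [1..<d]) w))"
    unfolding coef'_def[abs_def] by simp
  also have "\<dots> = mprod n (map (\<lambda>B. msum n {..<d} (\<lambda>c. tt c \<cdot>\<^sub>m B c)) (map (Bm \<sigma>) [1..<d]))"
    by (rule WS_prod) auto
  also have "\<dots> = mprod n (map (evm n AA) (map (\<lambda>k. [:- tt (\<sigma> k), 1:]) [1..<d]))"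
    unfolding map_map by (rule arg_cong[where f="mprod n"], rule map_cong[OF refl]) (simp add: msumB perm_lt[OF \<sigma>])
  also have "\<dots> = evm n AA (prod_list (map (\<lambda>k. [:- tt (\<sigma> k), 1:]) [1..<d]))"
    by (rule evm_prod_list[OF AA_carrier, symmetric])
  also have "prod_list (map (\<lambda>k. [:- tt (\<sigma> k), 1:]) [1..<d]) = Qp tt d (\<sigma> 0)"
    unfolding Qp_def by (rule prod_perm_tail[OF perm])
  finally show ?thesis .
qed

lemma WS_coef'': "\<sigma> \<in> Perm \<Longrightarrow> WS tt d n (d - Suc 0) (coef' \<sigma>) = evm n AA (Qp tt d (\<sigma> 0))"
  using WS_coef' by simp

lemma rel_ii_pre:
  assumes H: "\<forall>w. length w = d \<longrightarrow> msum n Perm (\<lambda>\<sigma>. coef \<sigma> w) = 0\<^sub>m n n"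
    and i0: "i0 < d"
  shows "msum n Perm (\<lambda>\<sigma>. Bm \<sigma> 0 i0 * evm n AA (Qp tt d (\<sigma> 0))) = 0\<^sub>m n n"
proof (rule eq_matI)
  fix a b assume "a < dim_row (0\<^sub>m n n :: 'k mat)" "b < dim_col (0\<^sub>m n n :: 'k mat)"
  hence a: "a < n" and b: "b < n" by auto
  have d: "0 < d" using i0 by simp
  have "0 = ws tt d (d - 1) (\<lambda>w. msum n Perm (\<lambda>\<sigma>. coef \<sigma> (i0 # w)) $$ (a,b))"
    by (rule ws_zero[symmetric]) (use H a b d in auto)
  also have "\<dots> = ws tt d (d - 1) (\<lambda>w. \<Sum>\<sigma>\<in>Perm. (Bm \<sigma> 0 i0 * coef' \<sigma> w) $$ (a,b))"
    using a b d by (simp add: coef_cons)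
  also have "\<dots> = (\<Sum>\<sigma>\<in>Perm. ws tt d (d - 1) (\<lambda>w. (Bm \<sigma> 0 i0 * coef' \<sigma> w) $$ (a,b)))"
    by (rule ws_sum) simp
  also have "\<dots> = (\<Sum>\<sigma>\<in>Perm. WS tt d n (d - 1) (\<lambda>w. Bm \<sigma> 0 i0 * coef' \<sigma> w) $$ (a,b))"
    using a b by (simp add: WS_def)
  also have "\<dots> = (\<Sum>\<sigma>\<in>Perm. (Bm \<sigma> 0 i0 * evm n AA (Qp tt d (\<sigma> 0))) $$ (a,b))"
    by (rule sum.cong) (simp_all add: WS_left WS_coef'')
  also have "\<dots> = msum n Perm (\<lambda>\<sigma>. Bm \<sigma> 0 i0 * evm n AA (Qp tt d (\<sigma> 0))) $$ (a,b)"
    using a b by simp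
  finally show "msum n Perm (\<lambda>\<sigma>. Bm \<sigma> 0 i0 * evm n AA (Qp tt d (\<sigma> 0))) $$ (a,b) = 0\<^sub>m n n $$ (a,b)"
    using a b by simp
qed auto

lemma evm_chi_mult:
  assumes "evm n AA (chiP tt d) = 0\<^sub>m n n"
  shows "evm n AA (chiP tt d * r) = 0\<^sub>m n n"
  unfolding evm_mult[OF AA_carrier] assms by (simp add: left_mult_zero_mat[OF evm_carrier[OF AA_carrier]])

lemma evm_QQ:
  assumes chi: "evm n AA (chiP tt d) = 0\<^sub>m n n" and m: "m < d"
  shows "evm n AA (Qp tt d m) * evm n AA (Qp tt d m) = gam tt d m \<cdot>\<^sub>m evm n AA (Qp tt d m)"
proof -
  obtain r where r: "Qp tt d m * Qp tt d m = smult (gam tt d m) (Qp tt d m) + chiP tt d * r"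
    using Qp_sq[OF m] by blast
  have "evm n AA (Qp tt d m) * evm n AA (Qp tt d m) = evm n AA (Qp tt d m * Qp tt d m)"
    by (simp add: evm_mult[OF AA_carrier])
  also have "\<dots> = gam tt d m \<cdot>\<^sub>m evm n AA (Qp tt d m) + 0\<^sub>m n n"
    unfolding r evm_add[OF AA_carrier] evm_smult[OF AA_carrier] evm_chi_mult[OF chi] ..
  also have "\<dots> = gam tt d m \<cdot>\<^sub>m evm n AA (Qp tt d m)"
    by (simp add: right_add_zero_mat[of _ n n])
  finally show ?thesis .
qed

lemma evm_QQ_ne:
  assumes chi: "evm n AA (chiP tt d) = 0\<^sub>m n n" and jm: "j < d" "m < d" "j \<noteq> m"
  shows "evm n AA (Qp tt d j) * evm n AA (Qp tt d m) = 0\<^sub>m n n"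
proof -
  obtain r where r: "Qp tt d j * Qp tt d m = chiP tt d * r"
    using Qp_mult_ne[OF jm] by blast
  show ?thesis
    unfolding evm_mult[OF AA_carrier, symmetric] r by (rule evm_chi_mult[OF chi])
qed

end


context setupB begin

lemma evmAA_carrier[simp]: "evm n AA p \<in> carrier_mat n n"
  by (rule evm_carrier[OF AA_carrier])

lemma tt_inj: "CHAR('k) = 0 \<or> d < CHAR('k) \<Longrightarrow> inj_on tt {..<d}"
proof -
  assume c: "CHAR('k) = 0 \<or> d < CHAR('k)"
  have "tt = of_nat" by (rule ext) (simp add: tt_def)
  thus ?thesis using of_nat_inj_char[OF c] by simp
qed

lemma rel_ii:
  assumes char: "CHAR('k) = 0 \<or> d < CHAR('k)"
    and H: "\<forall>w. length w = d \<longrightarrow> msum n Perm (\<lambda>\<sigma>. coef \<sigma> w) = 0\<^sub>m n n"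
    and i0: "i0 < d" and m: "m < d"
  shows "al i0 * evm n AA (Qp tt d m) = (if i0 = m then evm n AA (Qp tt d m) else 0\<^sub>m n n)"
proof -
  have chi: "evm n AA (chiP tt d) = 0\<^sub>m n n" by (rule rel_i[OF char H])
  define Q where "Q = evm n AA (Qp tt d m)"
  define D where "D = (if i0 = m then 1\<^sub>m n else 0\<^sub>m n n :: 'k mat)"
  define X where "X = gam tt d m \<cdot>\<^sub>m ((al i0 - D) * Q)"
  have QC[simp]: "Q \<in> carrier_mat n n" unfolding Q_def by simp
  have DC[simp]: "D \<in> carrier_mat n n" unfolding D_def by simp
  have dQ[simp]: "dim_row Q = n" "dim_col Q = n" using QC unfolding carrier_mat_def by auto
  have dD[simp]: "dim_row D = n" "dim_col D = n" using DC unfolding carrier_mat_def by auto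
  have aDC: "al i0 - D \<in> carrier_mat n n" by (rule minus_carrier_mat[OF DC])
  have YC: "(al i0 - D) * Q \<in> carrier_mat n n" using aDC QC by simp
  have dY: "dim_row ((al i0 - D) * Q) = n" "dim_col ((al i0 - D) * Q) = n" using YC by auto
  have XC: "X \<in> carrier_mat n n" unfolding X_def carrier_mat_def using QC DC unfolding carrier_mat_def by simp
  have d: "0 < d" using i0 by simp
  have "0\<^sub>m n n = msum n Perm (\<lambda>\<sigma>. Bm \<sigma> 0 i0 * evm n AA (Qp tt d (\<sigma> 0))) * Q"
    unfolding rel_ii_pre[OF H i0] by (simp add: left_mult_zero_mat[OF QC])
  also have "\<dots> = msum n Perm (\<lambda>\<sigma>. Bm \<sigma> 0 i0 * evm n AA (Qp tt d (\<sigma> 0)) * Q)"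
    by (rule msum_mult_right) (auto intro: mult_carrier_mat[OF Bm_carrier evmAA_carrier])
  also have "\<dots> = msum n Perm (\<lambda>\<sigma>. if \<sigma> 0 = m then X else 0\<^sub>m n n)"
  proof (rule msum_cong)
    fix \<sigma> assume \<sigma>: "\<sigma> \<in> Perm"
    have s0: "\<sigma> 0 < d" using perm_lt[OF \<sigma> d] .
    have assoc: "Bm \<sigma> 0 i0 * evm n AA (Qp tt d (\<sigma> 0)) * Q = Bm \<sigma> 0 i0 * (evm n AA (Qp tt d (\<sigma> 0)) * Q)"
      by (rule assoc_mult_mat[of _ n n _ n _ n]) auto
    show "Bm \<sigma> 0 i0 * evm n AA (Qp tt d (\<sigma> 0)) * Q = (if \<sigma> 0 = m then X else 0\<^sub>m n n)"
    proof (cases "\<sigma> 0 = m")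
      case True
      have BmE: "Bm \<sigma> 0 i0 = al i0 - D" unfolding Bm_def D_def using True i0 by auto
      have QQ: "evm n AA (Qp tt d (\<sigma> 0)) * Q = gam tt d m \<cdot>\<^sub>m Q"
        unfolding True Q_def by (rule evm_QQ[OF chi m])
      have "Bm \<sigma> 0 i0 * evm n AA (Qp tt d (\<sigma> 0)) * Q = (al i0 - D) * (gam tt d m \<cdot>\<^sub>m Q)"
        unfolding assoc unfolding QQ unfolding BmE ..
      also have "\<dots> = X" unfolding X_def by (rule mult_smult_distrib[OF aDC QC])
      finally show ?thesis using True by simp
    next
      case False
      have "evm n AA (Qp tt d (\<sigma> 0)) * Q = 0\<^sub>m n n"
        unfolding Q_def by (rule evm_QQ_ne[OF chi s0 m False])
      thus ?thesis unfolding assoc using False by (simp add: right_mult_zero_mat[of _ n n])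
    qed
  qed
  also have "\<dots> = of_nat (card {\<sigma>\<in>Perm. \<sigma> 0 = m}) \<cdot>\<^sub>m X"
    by (rule msum_filter_const[OF XC]) simp
  also have "\<dots> = of_nat (fact (d - 1)) \<cdot>\<^sub>m X" by (simp add: card_Perm_fix[OF m])
  finally have X0: "of_nat (fact (d - 1)) \<cdot>\<^sub>m X = 0\<^sub>m n n" by simp
  have fnz: "of_nat (fact (d - 1)) \<noteq> (0::'k)" by (rule fact_nz[OF char]) simp
  have gnz: "gam tt d m \<noteq> 0" by (rule gam_nz[OF tt_inj[OF char] m])
  have Y0: "(al i0 - D) * Q = 0\<^sub>m n n"
  proof (rule eq_matI)
    fix a b assume "a < dim_row (0\<^sub>m n n :: 'k mat)" "b < dim_col (0\<^sub>m n n :: 'k mat)"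
    hence a: "a < n" and b: "b < n" by auto
    have "(of_nat (fact (d - 1)) \<cdot>\<^sub>m X) $$ (a,b) = 0" using X0 a b by simp
    hence "of_nat (fact (d - 1)) * (gam tt d m * ((al i0 - D) * Q) $$ (a,b)) = 0"
      using a b dY unfolding X_def by simp
    thus "((al i0 - D) * Q) $$ (a,b) = 0\<^sub>m n n $$ (a,b)" using fnz gnz a b dY by simp
  qed auto
  have "(al i0 - D) * Q = al i0 * Q - D * Q" by (rule minus_mult_distrib_mat) auto
  hence Z: "al i0 * Q - D * Q = 0\<^sub>m n n" using Y0 by simp
  have "al i0 * Q = D * Q"
  proof (rule eq_matI)
    fix a b assume "a < dim_row (D * Q)" "b < dim_col (D * Q)"
    hence a: "a < n" and b: "b < n" by auto
    have "(al i0 * Q - D * Q) $$ (a,b) = 0" using Z a b by simp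
    thus "(al i0 * Q) $$ (a,b) = (D * Q) $$ (a,b)" using a b by simp
  qed auto
  also have "D * Q = (if i0 = m then Q else 0\<^sub>m n n)" unfolding D_def by (auto simp: left_mult_zero_mat)
  finally show ?thesis unfolding Q_def .
qed

lemma chi_OI:
  assumes char: "CHAR('k) = 0 \<or> d < CHAR('k)"
    and C: "chi_d n d (T_phi n d \<phi>) = ft_zero n"
  shows OI
proof -
  have H: "\<forall>w. length w = d \<longrightarrow> msum n Perm (\<lambda>\<sigma>. coef \<sigma> w) = 0\<^sub>m n n"
    using C unfolding chi_zero_iff .
  have chi: "evm n AA (chiP tt d) = 0\<^sub>m n n" by (rule rel_i[OF char H])
  show OI
  proof (cases "d = 0")
    case True
    have c1: "chiP tt d = 1" using True by (simp add: chiP_def)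
    have "1\<^sub>m n = evm n AA 1" by (simp add: evm_1[OF AA_carrier])
    also have "\<dots> = 0\<^sub>m n n" using chi unfolding c1 .
    finally have "1\<^sub>m n = (0\<^sub>m n n :: 'k mat)" .
    moreover have "msum n {..<d} al = 0\<^sub>m n n" using True by (intro msum_zero) auto
    ultimately show ?thesis unfolding OI_def using True by simp
  next
    case False
    hence d1: "d \<ge> 1" by simp
    define E where "E m = inverse (gam tt d m) \<cdot>\<^sub>m evm n AA (Qp tt d m)" for m
    have EC: "E m \<in> carrier_mat n n" for m unfolding E_def by simp
    have sumE: "msum n {..<d} E = 1\<^sub>m n"
    proof -
      have "evm n AA (\<Sum>m<d. smult (inverse (gam tt d m)) (Qp tt d m)) = msum n {..<d} E"
        unfolding E_def by (simp add: evm_sum[OF AA_carrier] evm_smult[OF AA_carrier])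
      thus ?thesis unfolding lagrange[OF tt_inj[OF char] d1] by simp
    qed
    have alE: "al i * E m = (if i = m then E m else 0\<^sub>m n n)" if i: "i < d" and m: "m < d" for i m
    proof -
      have "al i * E m = inverse (gam tt d m) \<cdot>\<^sub>m (al i * evm n AA (Qp tt d m))"
        unfolding E_def by (rule mult_smult_distrib) auto
      also have "\<dots> = (if i = m then E m else 0\<^sub>m n n)"
        unfolding rel_ii[OF char H i m] E_def by (auto intro!: eq_matI)
      finally show ?thesis .
    qed
    have alE2: "al i = E i" if i: "i < d" for i
    proof -
      have "al i = al i * msum n {..<d} E" unfolding sumE by (simp add: right_mult_one_mat[OF al_carrier])
      also have "\<dots> = msum n {..<d} (\<lambda>m. al i * E m)" by (rule msum_mult_left) (auto simp: EC)
      also have "\<dots> = msum n {..<d} (\<lambda>m. if m = i then E i else 0\<^sub>m n n)"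
        by (rule msum_cong) (use alE i in auto)
      also have "\<dots> = E i" by (rule msum_delta) (use i EC in auto)
      finally show ?thesis .
    qed
    have "msum n {..<d} al = msum n {..<d} E" by (rule msum_cong) (simp add: alE2)
    hence "msum n {..<d} al = 1\<^sub>m n" using sumE by simp
    moreover have "\<forall>i<d. \<forall>j<d. al i * al j = (if i = j then al i else 0\<^sub>m n n)"
    proof (intro allI impI)
      fix i j assume i: "i < d" and j: "j < d"
      have "al i * al j = al i * E j" using alE2[OF j] by simp
      also have "\<dots> = (if i = j then E j else 0\<^sub>m n n)" by (rule alE[OF i j])
      also have "\<dots> = (if i = j then al i else 0\<^sub>m n n)" using alE2[OF i] by auto
      finally show "al i * al j = (if i = j then al i else 0\<^sub>m n n)" .
    qed
    ultimately show ?thesis unfolding OI_def by simp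
  qed
qed

end


context setupB begin

lemma phi_zero: "\<phi> (0\<^sub>v d) = 0\<^sub>m n n"
proof -
  have z: "0\<^sub>v d \<in> carrier_vec d" by simp
  have "\<phi> (0\<^sub>v d) = \<phi> (0\<^sub>v d + 0\<^sub>v d)" by simp
  also have "\<dots> = \<phi> (0\<^sub>v d) + \<phi> (0\<^sub>v d)" using add z by blast
  finally have e: "\<phi> (0\<^sub>v d) = \<phi> (0\<^sub>v d) + \<phi> (0\<^sub>v d)" .
  have C: "\<phi> (0\<^sub>v d) \<in> carrier_mat n n" using into z by blast
  show ?thesis
  proof (rule eq_matI)
    fix i j assume "i < dim_row (0\<^sub>m n n :: 'k mat)" "j < dim_col (0\<^sub>m n n :: 'k mat)"
    hence i: "i < n" and j: "j < n" by auto
    have "\<phi> (0\<^sub>v d) $$ (i,j) = \<phi> (0\<^sub>v d) $$ (i,j) + \<phi> (0\<^sub>v d) $$ (i,j)"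
      using arg_cong[OF e, of "\<lambda>M. M $$ (i,j)"] C i j by simp
    hence "\<phi> (0\<^sub>v d) $$ (i,j) = 0" by (metis add_cancel_right_right)
    thus "\<phi> (0\<^sub>v d) $$ (i,j) = 0\<^sub>m n n $$ (i,j)" using i j by simp
  qed (use C in auto)
qed

lemma phi_decomp:
  assumes a: "a \<in> carrier_vec d"
  shows "\<phi> a = msum n {..<d} (\<lambda>c. (a $ c) \<cdot>\<^sub>m al c)"
proof -
  define tr where "tr m = vec d (\<lambda>i. if i < m then a $ i else 0)" for m
  have trC: "tr m \<in> carrier_vec d" for m unfolding tr_def by simp
  have "\<phi> (tr m) = msum n {..<m} (\<lambda>c. (a $ c) \<cdot>\<^sub>m al c)" if "m \<le> d" for m
    using that
  proof (induct m)
    case 0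
    have "tr 0 = 0\<^sub>v d" unfolding tr_def by (rule eq_vecI) auto
    thus ?case using phi_zero by (auto intro!: eq_matI)
  next
    case (Suc m)
    hence m: "m < d" by simp
    have "tr (Suc m) = tr m + (a $ m) \<cdot>\<^sub>v unit_vec d m"
      unfolding tr_def by (rule eq_vecI) (auto simp: m less_Suc_eq)
    hence "\<phi> (tr (Suc m)) = \<phi> (tr m) + (a $ m) \<cdot>\<^sub>m al m"
      using add trC smult unfolding al_def by simp
    also have "\<dots> = msum n {..<m} (\<lambda>c. (a $ c) \<cdot>\<^sub>m al c) + (a $ m) \<cdot>\<^sub>m al m"
      using Suc by simp
    also have "\<dots> = msum n {..<Suc m} (\<lambda>c. (a $ c) \<cdot>\<^sub>m al c)"
      by (rule eq_matI) (auto simp: lessThan_Suc add.commute)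
    finally show ?case .
  qed
  moreover have "tr d = a" unfolding tr_def by (rule eq_vecI) (use a in auto)
  ultimately show ?thesis by auto
qed

lemma OI_alg: assumes OI shows "alg_hom_kd n d \<phi>"
proof -
  have OI1: "\<And>i j. i < d \<Longrightarrow> j < d \<Longrightarrow> al i * al j = (if i = j then al i else 0\<^sub>m n n)"
    and OI2: "msum n {..<d} al = 1\<^sub>m n" using assms unfolding OI_def by auto
  have one: "\<phi> (vec d (\<lambda>_. 1)) = 1\<^sub>m n"
  proof -
    have "\<phi> (vec d (\<lambda>_. 1)) = msum n {..<d} (\<lambda>c. (vec d (\<lambda>_. 1) $ c) \<cdot>\<^sub>m al c)"
      by (rule phi_decomp) simp
    also have "\<dots> = msum n {..<d} al"
      by (rule msum_cong) (auto intro!: eq_matI)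
    finally show ?thesis unfolding OI2 .
  qed
  have mult: "\<phi> (vec d (\<lambda>i. a $ i * b $ i)) = \<phi> a * \<phi> b"
    if a: "a \<in> carrier_vec d" and b: "b \<in> carrier_vec d" for a b
  proof -
    have "\<phi> a * \<phi> b = msum n {..<d} (\<lambda>c. (a $ c) \<cdot>\<^sub>m al c) * msum n {..<d} (\<lambda>c. (b $ c) \<cdot>\<^sub>m al c)"
      using phi_decomp[OF a] phi_decomp[OF b] by simp
    also have "\<dots> = msum n {..<d} (\<lambda>c. msum n {..<d} (\<lambda>e. ((a $ c) \<cdot>\<^sub>m al c) * ((b $ e) \<cdot>\<^sub>m al e)))"
      by (rule msum_prod) auto
    also have "\<dots> = msum n {..<d} (\<lambda>c. msum n {..<d} (\<lambda>e. if e = c then (a $ c * b $ c) \<cdot>\<^sub>m al c else 0\<^sub>m n n))"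
    proof (intro msum_cong)
      fix c e assume c: "c \<in> {..<d}" and e: "e \<in> {..<d}"
      have "((a $ c) \<cdot>\<^sub>m al c) * ((b $ e) \<cdot>\<^sub>m al e) = (a $ c) \<cdot>\<^sub>m (al c * ((b $ e) \<cdot>\<^sub>m al e))"
        by (rule mult_smult_assoc_mat) auto
      also have "\<dots> = (a $ c) \<cdot>\<^sub>m ((b $ e) \<cdot>\<^sub>m (al c * al e))"
        by (subst mult_smult_distrib[of _ n n]) auto
      also have "\<dots> = (if e = c then (a $ c * b $ c) \<cdot>\<^sub>m al c else 0\<^sub>m n n)"
        using OI1[of c e] c e by (auto intro!: eq_matI)
      finally show "((a $ c) \<cdot>\<^sub>m al c) * ((b $ e) \<cdot>\<^sub>m al e) = (if e = c then (a $ c * b $ c) \<cdot>\<^sub>m al c else 0\<^sub>m n n)" .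
    qed
    also have "\<dots> = msum n {..<d} (\<lambda>c. (a $ c * b $ c) \<cdot>\<^sub>m al c)"
      by (rule msum_cong, rule msum_delta) auto
    also have "\<dots> = \<phi> (vec d (\<lambda>i. a $ i * b $ i))"
      by (subst phi_decomp) (auto intro!: msum_cong)
    finally show ?thesis by simp
  qed
  show ?thesis unfolding alg_hom_kd_def using one mult by auto
qed

lemma alg_OI: assumes H: "alg_hom_kd n d \<phi>" shows OI
proof -
  have one: "\<phi> (vec d (\<lambda>_. 1)) = 1\<^sub>m n"
    and mult: "\<And>a b. a \<in> carrier_vec d \<Longrightarrow> b \<in> carrier_vec d \<Longrightarrow> \<phi> (vec d (\<lambda>i. a $ i * b $ i)) = \<phi> a * \<phi> b"
    using H unfolding alg_hom_kd_def by auto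
  have "\<forall>i<d. \<forall>j<d. al i * al j = (if i = j then al i else 0\<^sub>m n n)"
  proof (intro allI impI)
    fix i j assume i: "i < d" and j: "j < d"
    have "al i * al j = \<phi> (vec d (\<lambda>k. unit_vec d i $ k * unit_vec d j $ k))"
      unfolding al_def by (rule mult[symmetric]) auto
    also have "vec d (\<lambda>k. unit_vec d i $ k * unit_vec d j $ k) = (if i = j then unit_vec d i else (0\<^sub>v d :: 'k vec))"
      by (rule eq_vecI) (auto simp: unit_vec_def)
    finally show "al i * al j = (if i = j then al i else 0\<^sub>m n n)"
      using phi_zero unfolding al_def by auto
  qed
  moreover have "msum n {..<d} al = 1\<^sub>m n"
  proof -
    have "1\<^sub>m n = msum n {..<d} (\<lambda>c. (vec d (\<lambda>_. 1) $ c) \<cdot>\<^sub>m al c)"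
      unfolding one[symmetric] by (rule phi_decomp) simp
    also have "\<dots> = msum n {..<d} al"
      by (rule msum_cong) (auto intro!: eq_matI)
    finally show ?thesis by simp
  qed
  ultimately show OI unfolding OI_def by simp
qed

end

theorem theoremB:
  fixes \<phi> :: "'k::field vec \<Rightarrow> 'k mat" and d n :: nat
  assumes char: "CHAR('k) = 0 \<or> d < CHAR('k)"
    and into: "\<forall>a\<in>carrier_vec d. \<phi> a \<in> carrier_mat n n"
    and add: "\<forall>a\<in>carrier_vec d. \<forall>b\<in>carrier_vec d. \<phi> (a + b) = \<phi> a + \<phi> b"
    and smult: "\<forall>c. \<forall>a\<in>carrier_vec d. \<phi> (c \<cdot>\<^sub>v a) = c \<cdot>\<^sub>m \<phi> a"
  shows "alg_hom_kd n d \<phi> \<longleftrightarrow> chi_d n d (T_phi n d \<phi>) = ft_zero n"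
proof -
  interpret S: setupB \<phi> d n using into add smult by unfold_locales
  show ?thesis
  proof
    assume "alg_hom_kd n d \<phi>"
    thus "chi_d n d (T_phi n d \<phi>) = ft_zero n" by (intro S.OI_chi S.alg_OI)
  next
    assume "chi_d n d (T_phi n d \<phi>) = ft_zero n"
    thus "alg_hom_kd n d \<phi>" by (intro S.OI_alg S.chi_OI[OF char])
  qed
qed


end
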